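(* Let $\mathscr{V}\subset \mathbb{R}_{\max}^n$ be a max-plus cone with full support and $\{ \mathscr{H}_r \}_{r\in \mathbb{N}}$ be a decreasing sequence of half-spaces such that $\mathscr{V}\subset \mathscr{H}_r$ for all $r \in \mathbb{N}$. Then there exists a half-space $\mathscr{H}$ such that $\mathscr{H}=\cap_{r\in \mathbb{N}} \mathscr{H}_r$.
   Context: $\mathbb{R}_{\max}=\mathbb{R}\cup\{-\infty\}$ with $a\oplus b=\max(a,b)$ and $ab=a+b$; the zero element is $-\infty$. A max-plus cone is a subset $\mathscr{V}\subset\mathbb{R}_{\max}^n$ with $\lambda u\oplus\mu v\in\mathscr{V}$ for all $u,v\in\mathscr{V}$, $\lambda,\mu\in\mathbb{R}_{\max}$. A half-space is a set $\{x\in\mathbb{R}_{\max}^n : \max_i(a_i+x_i)\le \max_j(b_j+x_j)\}$ with $a,b\in\mathbb{R}_{\max}^n$. The support of $v$ is $\{k : v_k\neq-\infty\}$, the support of $\mathscr{V}$ is the union of supports of its elements, and $\mathscr{V}$ has full support if its support is $\{1,\dots,n\}$. *)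

theory Defs
  imports "HOL-Library.Extended_Real"
begin

text \<open>Max-plus semiring R_max = R \<union> {-\<infinity>}, modelled inside ereal as the elements
  different from +\<infinity>. Tropical sum is max, tropical product is +, zero is -\<infinity>.\<close>

definition rmax_vec :: "('n \<Rightarrow> ereal) \<Rightarrow> bool" where
  "rmax_vec x \<longleftrightarrow> (\<forall>i. x i \<noteq> \<infinity>)"

definition maxplus_cone :: "('n \<Rightarrow> ereal) set \<Rightarrow> bool" where
  "maxplus_cone V \<longleftrightarrow> (\<forall>v\<in>V. rmax_vec v) \<and>
     (\<forall>u\<in>V. \<forall>v\<in>V. \<forall>l m. l \<noteq> \<infinity> \<longrightarrow> m \<noteq> \<infinity> \<longrightarrow>
        (\<lambda>i. max (l + u i) (m + v i)) \<in> V)"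

definition halfspace :: "('n::finite \<Rightarrow> ereal) set \<Rightarrow> bool" where
  "halfspace H \<longleftrightarrow> (\<exists>a b. rmax_vec a \<and> rmax_vec b \<and>
     H = {x. rmax_vec x \<and> Max (range (\<lambda>i. a i + x i)) \<le> Max (range (\<lambda>j. b j + x j))})"

definition support_vec :: "('n \<Rightarrow> ereal) \<Rightarrow> 'n set" where
  "support_vec v = {k. v k \<noteq> -\<infinity>}"

definition support_set :: "('n \<Rightarrow> ereal) set \<Rightarrow> 'n set" where
  "support_set V = (\<Union>v\<in>V. support_vec v)"

definition full_support :: "('n \<Rightarrow> ereal) set \<Rightarrow> bool" where
  "full_support V \<longleftrightarrow> support_set V = UNIV"

end

theory Submission imports Defs "HOL-Analysis.Extended_Real_Limits" "HOL-Library.Infinite_Set"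
begin


lemma tendsto_Max_fin:
  fixes g :: "nat \<Rightarrow> 'i \<Rightarrow> ereal"
  assumes "finite A" "A \<noteq> {}" "\<And>j. j \<in> A \<Longrightarrow> (\<lambda>k. g k j) \<longlonglongrightarrow> h j"
  shows "(\<lambda>k. Max ((g k) ` A)) \<longlonglongrightarrow> Max (h ` A)"
  using assms
proof (induction A rule: finite_ne_induct)
  case (singleton x)
  then show ?case by simp
next
  case (insert x F)
  have e: "\<And>k. Max (g k ` insert x F) = max (g k x) (Max (g k ` F))"
    using insert by (simp add: Max_insert)
  have "Max (h ` insert x F) = max (h x) (Max (h ` F))"
    using insert by (simp add: Max_insert)
  then show ?case unfolding e using insert by (auto intro!: tendsto_max)
qed

lemma subseq_conv:
  fixes f :: "nat \<Rightarrow> 'i \<Rightarrow> ereal"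
  assumes "finite A"
  shows "\<exists>r l. strict_mono r \<and> (\<forall>i\<in>A. (\<lambda>k. f (r k) i) \<longlonglongrightarrow> l i)"
  using assms
proof (induction A rule: finite_induct)
  case empty
  show ?case by (rule exI[of _ id]) (auto simp: strict_mono_def)
next
  case (insert a A)
  then obtain r l where r: "strict_mono r" and l: "\<forall>i\<in>A. (\<lambda>k. f (r k) i) \<longlonglongrightarrow> l i" by blast
  have sc: "seq_compact (UNIV :: ereal set)"
    by (rule compact_imp_seq_compact[OF compact_UNIV])
  obtain l' r' where r': "strict_mono (r' :: nat \<Rightarrow> nat)" and l': "((\<lambda>k. f (r k) a) \<circ> r') \<longlonglongrightarrow> l'"
    using seq_compactE[OF sc, of "\<lambda>k. f (r k) a"] by blast
  have "strict_mono (r \<circ> r')" using r r' by (rule strict_mono_o)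
  moreover have "\<forall>i\<in>insert a A. (\<lambda>k. f ((r \<circ> r') k) i) \<longlonglongrightarrow> (l(a := l')) i"
  proof
    fix i assume "i \<in> insert a A"
    show "(\<lambda>k. f ((r \<circ> r') k) i) \<longlonglongrightarrow> (l(a := l')) i"
    proof (cases "i = a")
      case True then show ?thesis using l' by (simp add: o_def)
    next
      case False
      then have "i \<in> A" using \<open>i \<in> insert a A\<close> by auto
      then have "((\<lambda>k. f (r k) i) \<circ> r') \<longlonglongrightarrow> l i" using l r' LIMSEQ_subseq_LIMSEQ by blast
      then show ?thesis using False by (simp add: o_def)
    qed
  qed
  ultimately show ?case by blast
qed

lemma pigeon:
  fixes P :: "nat \<Rightarrow> 'n::finite \<Rightarrow> bool"
  assumes "\<And>r. \<exists>j. P r j"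
  shows "\<exists>j. infinite {r. P r j}"
proof (rule ccontr)
  assume "\<not> ?thesis"
  then have "finite (\<Union>j. {r. P r j})" by (intro finite_UN_I) auto
  moreover have "(\<Union>j. {r. P r j}) = UNIV" using assms by auto
  ultimately show False by simp
qed

lemma eventually_less_lim:
  fixes f g :: "nat \<Rightarrow> ereal"
  assumes "f \<longlonglongrightarrow> a" "g \<longlonglongrightarrow> b" "a < b"
  shows "eventually (\<lambda>k. f k < g k) sequentially"
proof -
  obtain c where c: "a < c" "c < b" using dense[OF assms(3)] by blast
  have "eventually (\<lambda>k. f k < c) sequentially" using order_tendstoD(2)[OF assms(1) c(1)] .
  moreover have "eventually (\<lambda>k. c < g k) sequentially" using order_tendstoD(1)[OF assms(2) c(2)] .
  ultimately show ?thesis by eventually_elim auto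
qed



definition HS :: "('n::finite \<Rightarrow> ereal) \<Rightarrow> ('n \<Rightarrow> ereal) \<Rightarrow> ('n \<Rightarrow> ereal) set" where
  "HS a b = {x. rmax_vec x \<and> Max (range (\<lambda>i. a i + x i)) \<le> Max (range (\<lambda>j. b j + x j))}"

lemma halfspace_HS: "halfspace H \<longleftrightarrow> (\<exists>a b. rmax_vec a \<and> rmax_vec b \<and> H = HS a b)"
  unfolding halfspace_def HS_def by simp

lemma Max_range_le_iff:
  fixes f g :: "'n::finite \<Rightarrow> 'a::linorder"
  shows "Max (range f) \<le> Max (range g) \<longleftrightarrow> (\<forall>i. \<exists>j. f i \<le> g j)"
proof -
  have "Max (range f) \<le> Max (range g) \<longleftrightarrow> (\<forall>i. f i \<le> Max (range g))" by (subst Max_le_iff) auto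
  also have "\<dots> \<longleftrightarrow> (\<forall>i. \<exists>j. f i \<le> g j)" by (simp add: Max_ge_iff)
  finally show ?thesis .
qed

lemma HS_iff: "x \<in> HS a b \<longleftrightarrow> rmax_vec x \<and> (\<forall>i. \<exists>j. a i + x i \<le> b j + x j)"
  unfolding HS_def by (simp add: Max_range_le_iff)

lemma HS_norm:
  fixes a b :: "'n::finite \<Rightarrow> ereal"
  assumes rb: "rmax_vec b"
  defines "a' \<equiv> \<lambda>i. if b i < a i then a i else -\<infinity>"
  defines "b' \<equiv> \<lambda>i. if b i < a i then -\<infinity> else b i"
  shows "HS a b = HS a' b'"
proof
  show "HS a' b' \<subseteq> HS a b"
  proof
    fix x assume x: "x \<in> HS a' b'"
    show "x \<in> HS a b" unfolding HS_iff
    proof (intro conjI allI)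
      show "rmax_vec x" using x HS_iff by blast
      fix i
      show "\<exists>j. a i + x i \<le> b j + x j"
      proof (cases "b i < a i")
        case True
        obtain j where j: "a' i + x i \<le> b' j + x j" using x HS_iff by blast
        have "b' j \<le> b j" by (simp add: b'_def)
        have "a i + x i = a' i + x i" using True by (simp add: a'_def)
        also have "\<dots> \<le> b' j + x j" by (rule j)
        also have "\<dots> \<le> b j + x j" using \<open>b' j \<le> b j\<close> by (rule add_right_mono)
        finally show ?thesis by blast
      next
        case False
        then show ?thesis by (intro exI[of _ i]) (simp add: add_right_mono)
      qed
    qed
  qed
next
  show "HS a b \<subseteq> HS a' b'"
  proof
    fix x assume x: "x \<in> HS a b"
    then have rx: "rmax_vec x" and c: "\<And>i. \<exists>j. a i + x i \<le> b j + x j" using HS_iff by blast+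
    have "Max (range (\<lambda>j. b j + x j)) \<in> range (\<lambda>j. b j + x j)" by (rule Max_in) auto
    then obtain js where js0: "Max (range (\<lambda>j. b j + x j)) = b js + x js" by (rule rangeE)
    then have js: "b js + x js = Max (range (\<lambda>j. b j + x j))" by simp
    have cm: "a i + x i \<le> b js + x js" for i
    proof -
      obtain j where j: "a i + x i \<le> b j + x j" using c by blast
      have m: "b j + x j \<le> Max (range (\<lambda>j. b j + x j))" by (rule Max_ge) auto
      show ?thesis using order_trans[OF j m] js by simp
    qed
    show "x \<in> HS a' b'" unfolding HS_iff
    proof (intro conjI allI)
      show "rmax_vec x" by fact
      fix i
      have aa: "a' i + x i \<le> a i + x i" by (simp add: a'_def add_right_mono)
      show "\<exists>j. a' i + x i \<le> b' j + x j"
      proof (cases "b js < a js")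
        case False
        then show ?thesis using aa cm[of i] by (intro exI[of _ js]) (simp add: b'_def)
      next
        case True
        have "x js = -\<infinity>"
        proof (rule ccontr)
          assume "x js \<noteq> -\<infinity>"
          moreover have "x js \<noteq> \<infinity>" using rx by (simp add: rmax_vec_def)
          ultimately obtain r where "x js = ereal r" by (cases "x js") auto
          then have "b js + x js < a js + x js" using True
            by (cases "a js"; cases "b js") auto
          then show False using cm[of js] by simp
        qed
        then have "a i + x i = -\<infinity>" using cm[of i] rx rb
          by (cases "b js") (auto simp: rmax_vec_def)
        then have "a' i + x i \<le> -\<infinity>" using aa by (simp only:)
        then show ?thesis by (intro exI[of _ js]) (rule order_trans, assumption, simp)
      qed
    qed
  qed
qed

lemma shift_le:
  fixes p q y z :: ereal
  assumes "p \<noteq> \<infinity>" "q \<noteq> \<infinity>" "y \<noteq> \<infinity>" "z \<noteq> \<infinity>"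
  shows "(p - ereal c) + y \<le> (q - ereal c) + z \<longleftrightarrow> p + y \<le> q + z"
  using assms by (cases p; cases q; cases y; cases z) auto

lemma HS_all:
  fixes a b :: "'n::finite \<Rightarrow> ereal"
  assumes "\<And>i. a i = -\<infinity>" "rmax_vec b"
  shows "HS a b = {x. rmax_vec x}"
proof -
  have "-\<infinity> + x i \<le> b j + x j" if "rmax_vec x" for x i j
    using that by (cases "x i") (auto simp: rmax_vec_def)
  then show ?thesis using assms unfolding set_eq_iff HS_iff by auto
qed

lemma normal_form:
  fixes H :: "('n::finite \<Rightarrow> ereal) set"
  assumes hs: "halfspace H" and vH: "v \<in> H" and vfin: "\<forall>i. v i \<noteq> -\<infinity>"
  shows "\<exists>\<alpha> \<beta>. rmax_vec \<alpha> \<and> rmax_vec \<beta> \<and> (\<forall>i. \<alpha> i = -\<infinity> \<or> \<beta> i = -\<infinity>) \<and> (\<forall>j. \<beta> j \<le> 0)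
     \<and> (\<exists>j. \<beta> j = 0) \<and> H = HS \<alpha> \<beta>"
proof -
  obtain a b where ra: "rmax_vec a" and rb: "rmax_vec b" and H: "H = HS a b"
    using hs halfspace_HS by blast
  define a' where "a' = (\<lambda>i. if b i < a i then a i else -\<infinity>)"
  define b' where "b' = (\<lambda>i. if b i < a i then -\<infinity> else b i)"
  have H': "H = HS a' b'" using H HS_norm[OF rb] unfolding a'_def b'_def by simp
  have ra': "rmax_vec a'" using ra by (simp add: rmax_vec_def a'_def)
  have rb': "rmax_vec b'" using rb by (simp add: rmax_vec_def b'_def)
  have disj: "\<forall>i. a' i = -\<infinity> \<or> b' i = -\<infinity>" by (simp add: a'_def b'_def)
  define c where "c = Max (range b')"
  have "c \<in> range b'" unfolding c_def by (rule Max_in) auto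
  then obtain j0 where j0: "c = b' j0" by (rule rangeE)
  have bc: "b' j \<le> c" for j unfolding c_def by (rule Max_ge) auto
  have vr: "rmax_vec v" using vH H' HS_iff by blast
  show ?thesis
  proof (cases "c = -\<infinity>")
    case True
    then have bm: "b' j = -\<infinity>" for j using bc[of j] by simp
    have am: "a' i = -\<infinity>" for i
    proof -
      obtain j where j: "a' i + v i \<le> b' j + v j" using vH H' HS_iff by blast
      have "b' j + v j = -\<infinity>" using bm[of j] vr by (cases "v j") (auto simp: rmax_vec_def)
      then have "a' i + v i \<le> -\<infinity>" using j by (simp only:)
      then have "a' i + v i = -\<infinity>" by (simp only: ereal_infty_less_eq(2))
      then show ?thesis using vfin vr ra' by (auto simp: rmax_vec_def)
    qed
    have "H = {x. rmax_vec x}" using H' HS_all[OF am rb'] by simp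
    moreover have "HS (\<lambda>_. -\<infinity>) (\<lambda>_. 0) = {x. rmax_vec x}" by (rule HS_all) (auto simp: rmax_vec_def)
    ultimately show ?thesis
      by (intro exI[of _ "\<lambda>_. -\<infinity>"] exI[of _ "\<lambda>_. 0"]) (auto simp: rmax_vec_def)
  next
    case False
    have "c \<noteq> \<infinity>" using j0 rb' by (simp add: rmax_vec_def)
    then obtain cr where cr: "c = ereal cr" using False by (cases c) auto
    define \<alpha> where "\<alpha> = (\<lambda>i. a' i - ereal cr)"
    define \<beta> where "\<beta> = (\<lambda>i. b' i - ereal cr)"
    have "HS a' b' = HS \<alpha> \<beta>"
    proof -
      have "(\<alpha> i + x i \<le> \<beta> j + x j) \<longleftrightarrow> (a' i + x i \<le> b' j + x j)" if "rmax_vec x" for x i j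
        unfolding \<alpha>_def \<beta>_def using that ra' rb' by (intro shift_le) (auto simp: rmax_vec_def)
      then show ?thesis unfolding set_eq_iff HS_iff by blast
    qed
    moreover have "rmax_vec \<alpha>" unfolding rmax_vec_def \<alpha>_def
    proof
      fix i show "a' i - ereal cr \<noteq> \<infinity>" using ra' by (cases "a' i") (auto simp: rmax_vec_def)
    qed
    moreover have "rmax_vec \<beta>" unfolding rmax_vec_def \<beta>_def
    proof
      fix i show "b' i - ereal cr \<noteq> \<infinity>" using rb' by (cases "b' i") (auto simp: rmax_vec_def)
    qed
    moreover have "\<forall>i. \<alpha> i = -\<infinity> \<or> \<beta> i = -\<infinity>"
    proof
      fix i show "\<alpha> i = -\<infinity> \<or> \<beta> i = -\<infinity>" using disj[rule_format, of i] unfolding \<alpha>_def \<beta>_def by auto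
    qed
    moreover have "\<forall>j. \<beta> j \<le> 0"
    proof
      fix j show "\<beta> j \<le> 0" using bc[of j] cr rb' unfolding \<beta>_def by (cases "b' j") (auto simp: rmax_vec_def)
    qed
    moreover have "\<beta> j0 = 0" using j0 cr unfolding \<beta>_def by (metis ereal_minus(1) diff_self zero_ereal_def)
    ultimately show ?thesis using H' by blast
  qed
qed


lemma exists_fin:
  fixes V :: "('n::finite \<Rightarrow> ereal) set"
  assumes cone: "maxplus_cone V" and fs: "full_support V"
  shows "\<exists>v\<in>V. \<forall>i. v i \<noteq> -\<infinity> \<and> v i \<noteq> \<infinity>"
proof -
  have sup: "\<exists>w\<in>V. w i \<noteq> -\<infinity>" for i
    using fs unfolding full_support_def support_set_def support_vec_def by blast
  have "finite A \<Longrightarrow> \<exists>v\<in>V. \<forall>i\<in>A. v i \<noteq> -\<infinity>" for A :: "'n set"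
  proof (induction A rule: finite_induct)
    case empty
    then show ?case using sup by blast
  next
    case (insert a A)
    then obtain v where v: "v \<in> V" "\<forall>i\<in>A. v i \<noteq> -\<infinity>" by blast
    obtain w where w: "w \<in> V" "w a \<noteq> -\<infinity>" using sup by blast
    have c2: "\<And>u w l m. u\<in>V \<Longrightarrow> w\<in>V \<Longrightarrow> l \<noteq> \<infinity> \<Longrightarrow> m \<noteq> \<infinity> \<Longrightarrow> (\<lambda>i. max (l + u i) (m + w i)) \<in> V"
      using cone unfolding maxplus_cone_def by blast
    define z where "z = (\<lambda>i. max (0 + v i) (0 + w i))"
    have "z \<in> V" unfolding z_def by (rule c2[OF v(1) w(1)]) simp_all
    moreover have "\<forall>i\<in>insert a A. z i \<noteq> -\<infinity>"
      using v(2) w(2) by (auto simp: max_def z_def)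
    ultimately show ?case by blast
  qed
  from this[of UNIV] obtain v where "v \<in> V" "\<forall>i. v i \<noteq> -\<infinity>" by auto
  moreover have "\<forall>i. v i \<noteq> \<infinity>" using \<open>v \<in> V\<close> cone unfolding maxplus_cone_def rmax_vec_def by blast
  ultimately show ?thesis by blast
qed

lemma shift2:
  fixes p q :: ereal
  assumes "p \<noteq> \<infinity>" "q \<noteq> \<infinity>" "p + ereal a \<le> q + ereal b"
  shows "p + ereal (a - t) \<le> q + ereal (b - t)"
  using assms by (cases p; cases q) auto

theorem lemma3p3:
  fixes V :: "('n::finite \<Rightarrow> ereal) set"
    and H :: "nat \<Rightarrow> ('n \<Rightarrow> ereal) set"
  assumes "maxplus_cone V"
    and "full_support V"
    and "\<And>r. halfspace (H r)"
    and "\<And>r. H (Suc r) \<subseteq> H r"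
    and "\<And>r. V \<subseteq> H r"
  shows "\<exists>H'. halfspace H' \<and> H' = (\<Inter>r. H r)"
proof -
  obtain v where vV: "v \<in> V" and vf: "\<And>i. v i \<noteq> -\<infinity>" "\<And>i. v i \<noteq> \<infinity>"
    using exists_fin[OF assms(1,2)] by blast
  have vH: "v \<in> H r" for r using assms(5) vV by blast
  have "\<forall>r. \<exists>\<alpha> \<beta>. rmax_vec \<alpha> \<and> rmax_vec \<beta> \<and> (\<forall>i. \<alpha> i = -\<infinity> \<or> \<beta> i = -\<infinity>) \<and> (\<forall>j. \<beta> j \<le> 0)
     \<and> (\<exists>j. \<beta> j = 0) \<and> H r = HS \<alpha> \<beta>"
    using normal_form[OF assms(3) vH] vf by blast
  then obtain \<alpha> \<beta> where nf: "\<forall>r. rmax_vec (\<alpha> r) \<and> rmax_vec (\<beta> r) \<and> (\<forall>i. \<alpha> r i = -\<infinity> \<or> \<beta> r i = -\<infinity>) \<and> (\<forall>j. \<beta> r j \<le> 0)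
     \<and> (\<exists>j. \<beta> r j = 0) \<and> H r = HS (\<alpha> r) (\<beta> r)"
    by metis
  have ra: "rmax_vec (\<alpha> r)" and rb: "rmax_vec (\<beta> r)" and dj: "\<alpha> r i = -\<infinity> \<or> \<beta> r i = -\<infinity>"
    and bn: "\<beta> r j \<le> 0" and b0: "\<exists>j. \<beta> r j = 0" and Hr: "H r = HS (\<alpha> r) (\<beta> r)" for r i j
    using nf by blast+
  obtain j0 where inf: "infinite {r. \<beta> r j0 = 0}" using pigeon[of "\<lambda>r j. \<beta> r j = 0"] b0 by blast
  define S where "S = {r. \<beta> r j0 = 0}"
  define e where "e = enumerate S"
  have sme: "strict_mono e" unfolding e_def strict_mono_def using inf S_def by (simp add: enumerate_mono)
  have eS: "\<beta> (e k) j0 = 0" for k using enumerate_in_set[of S k] inf unfolding e_def S_def by auto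
  obtain r1 la where r1: "strict_mono r1" and la0: "\<forall>i\<in>UNIV. (\<lambda>k. \<alpha> (e (r1 k)) i) \<longlonglongrightarrow> la i"
    using subseq_conv[OF finite_class.finite_UNIV, of "\<lambda>k. \<alpha> (e k)"] by blast
  obtain r2 lb where r2: "strict_mono r2" and lb0: "\<forall>i\<in>UNIV. (\<lambda>k. \<beta> (e (r1 (r2 k))) i) \<longlonglongrightarrow> lb i"
    using subseq_conv[OF finite_class.finite_UNIV, of "\<lambda>k. \<beta> (e (r1 k))"] by blast
  define \<phi> where "\<phi> = (\<lambda>k. e (r1 (r2 k)))"
  have smp: "strict_mono \<phi>" unfolding \<phi>_def using sme r1 r2 by (simp add: strict_mono_def)
  have A: "(\<lambda>k. \<alpha> (\<phi> k) i) \<longlonglongrightarrow> la i" for i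
    using LIMSEQ_subseq_LIMSEQ[OF la0[rule_format, of i] r2] unfolding \<phi>_def by (simp add: o_def)
  have B: "(\<lambda>k. \<beta> (\<phi> k) j) \<longlonglongrightarrow> lb j" for j
    using lb0 unfolding \<phi>_def by simp
  have lbn: "lb j \<le> 0" for j by (rule LIMSEQ_le_const2[OF B]) (auto intro: bn)
  have lbj0: "lb j0 = 0"
  proof -
    have eq: "(\<lambda>k. \<beta> (\<phi> k) j0) = (\<lambda>k. 0)" unfolding \<phi>_def using eS by simp
    have "(\<lambda>k. \<beta> (\<phi> k) j0) \<longlonglongrightarrow> 0" unfolding eq by (rule tendsto_const)
    then show ?thesis using LIMSEQ_unique[OF B[of j0]] by blast
  qed
  have lbinf: "lb j \<noteq> \<infinity>" for j using lbn[of j] by auto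

  define Mv where "Mv = Max (range v)"
  have vle: "v j \<le> Mv" for j unfolding Mv_def by (rule Max_ge) auto
  have "Mv \<in> range v" unfolding Mv_def by (rule Max_in) auto
  then have Mvinf: "Mv \<noteq> \<infinity>" using vf by auto
  have avb: "\<alpha> r i + v i \<le> Mv" for r i
  proof -
    obtain j where j: "\<alpha> r i + v i \<le> \<beta> r j + v j" using vH[of r] Hr[of r] HS_iff by blast
    have "\<beta> r j + v j \<le> 0 + v j" by (rule add_right_mono[OF bn])
    then show ?thesis using j vle[of j] by simp
  qed
  have lainf: "la i \<noteq> \<infinity>" for i
  proof -
    have "(\<lambda>k. \<alpha> (\<phi> k) i + v i) \<longlonglongrightarrow> la i + v i"
      by (rule tendsto_add_ereal_general[OF _ A tendsto_const]) (use vf in auto)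
    then have "la i + v i \<le> Mv" by (rule LIMSEQ_le_const2) (auto intro: avb)
    then show ?thesis using vf[of i] Mvinf by (cases "v i"; cases Mv) auto
  qed
  have ldj: "la i = -\<infinity> \<or> lb i = -\<infinity>" for i
  proof (rule ccontr)
    assume "\<not> ?thesis"
    then have "-\<infinity> < la i" "-\<infinity> < lb i" by auto
    then have "eventually (\<lambda>k. -\<infinity> < \<alpha> (\<phi> k) i) sequentially" "eventually (\<lambda>k. -\<infinity> < \<beta> (\<phi> k) i) sequentially"
      using order_tendstoD(1)[OF A] order_tendstoD(1)[OF B] by blast+
    then have "eventually (\<lambda>k. -\<infinity> < \<alpha> (\<phi> k) i \<and> -\<infinity> < \<beta> (\<phi> k) i) sequentially"
      by (rule eventually_conj)
    then obtain k where "-\<infinity> < \<alpha> (\<phi> k) i" "-\<infinity> < \<beta> (\<phi> k) i" by (auto simp: eventually_sequentially)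
    then show False using dj[of "\<phi> k" i] by auto
  qed
  define L where "L = HS la lb"
  have hL: "halfspace L" unfolding L_def halfspace_HS using lainf lbinf by (auto simp: rmax_vec_def)
  have limA: "(\<lambda>k. Max (range (\<lambda>i. \<alpha> (\<phi> k) i + x i))) \<longlonglongrightarrow> Max (range (\<lambda>i. la i + x i))"
    if "rmax_vec x" for x
  proof (rule tendsto_Max_fin[of UNIV "\<lambda>k i. \<alpha> (\<phi> k) i + x i"])
    fix i show "(\<lambda>k. \<alpha> (\<phi> k) i + x i) \<longlonglongrightarrow> la i + x i"
      by (rule tendsto_add_ereal_general[OF _ A tendsto_const]) (use that lainf in \<open>auto simp: rmax_vec_def\<close>)
  qed auto
  have limB: "(\<lambda>k. Max (range (\<lambda>i. \<beta> (\<phi> k) i + x i))) \<longlonglongrightarrow> Max (range (\<lambda>i. lb i + x i))"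
    if "rmax_vec x" for x
  proof (rule tendsto_Max_fin[of UNIV "\<lambda>k i. \<beta> (\<phi> k) i + x i"])
    fix i show "(\<lambda>k. \<beta> (\<phi> k) i + x i) \<longlonglongrightarrow> lb i + x i"
      by (rule tendsto_add_ereal_general[OF _ B tendsto_const]) (use that lbinf in \<open>auto simp: rmax_vec_def\<close>)
  qed auto
  have IL: "(\<Inter>r. H r) \<subseteq> L"
  proof
    fix x assume x: "x \<in> (\<Inter>r. H r)"
    then have rx: "rmax_vec x" using Hr[of 0] HS_iff by blast
    have "Max (range (\<lambda>i. \<alpha> (\<phi> k) i + x i)) \<le> Max (range (\<lambda>i. \<beta> (\<phi> k) i + x i))" for k
      using x Hr[of "\<phi> k"] unfolding HS_def by blast
    then have "Max (range (\<lambda>i. la i + x i)) \<le> Max (range (\<lambda>i. lb i + x i))"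
      by (intro LIMSEQ_le[OF limA[OF rx] limB[OF rx]]) auto
    then show "x \<in> L" unfolding L_def HS_def using rx by blast
  qed
  have dec: "m \<le> p \<Longrightarrow> H p \<subseteq> H m" for m p
    by (rule lift_Suc_antimono_le[of H]) (use assms(4) in auto)
  have strict_in: "y \<in> (\<Inter>r. H r)"
    if ry: "rmax_vec y" and lt: "Max (range (\<lambda>i. la i + y i)) < Max (range (\<lambda>i. lb i + y i))" for y
  proof -
    have "eventually (\<lambda>k. Max (range (\<lambda>i. \<alpha> (\<phi> k) i + y i)) < Max (range (\<lambda>i. \<beta> (\<phi> k) i + y i))) sequentially"
      by (rule eventually_less_lim[OF limA[OF ry] limB[OF ry] lt])
    then obtain N where N: "\<And>k. k \<ge> N \<Longrightarrow> Max (range (\<lambda>i. \<alpha> (\<phi> k) i + y i)) < Max (range (\<lambda>i. \<beta> (\<phi> k) i + y i))"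
      by (auto simp: eventually_sequentially)
    show ?thesis
    proof
      fix r
      define k where "k = max N r"
      have "y \<in> H (\<phi> k)" unfolding Hr HS_def using N[of k] ry k_def by (auto intro: less_imp_le)
      moreover have "r \<le> \<phi> k" using seq_suble[OF smp, of k] k_def by simp
      ultimately show "y \<in> H r" using dec by blast
    qed
  qed

  have vL: "v \<in> L" using IL vH by blast
  define v' where "v' i = real_of_ereal (v i)" for i
  have vv: "v i = ereal (v' i)" for i using vf[of i] unfolding v'_def by (cases "v i") auto
  have LH: "L \<subseteq> H m" for m
  proof
    fix x assume xL: "x \<in> L"
    have rx: "rmax_vec x" and lx: "\<And>i. \<exists>j. la i + x i \<le> lb j + x j" using xL unfolding L_def HS_iff by blast+
    have xinf: "x i \<noteq> \<infinity>" for i using rx by (simp add: rmax_vec_def)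
    define u where "u t i = max (x i) (ereal (v' i - t))" for t i
    define y where "y t \<delta> i = (if la i = -\<infinity> then u t i else u t i - ereal \<delta>)" for t \<delta> i
    have ureal: "\<exists>c. u t i = ereal c" for t i
      using xinf[of i] unfolding u_def by (cases "x i") (auto simp: max_def)
    have xu: "x i \<le> u t i" for t i unfolding u_def by simp
    have yu: "y t \<delta> i \<le> u t i" if "0 < \<delta>" for t \<delta> i
      using ureal[of t i] that unfolding y_def by auto
    have yge: "u t i - ereal \<delta> \<le> y t \<delta> i" if "0 < \<delta>" for t \<delta> i
      using ureal[of t i] that unfolding y_def by auto
    have yin: "y t \<delta> \<in> H m" if dpos: "0 < \<delta>" for t \<delta>
    proof -
      have uL: "u t \<in> L" unfolding L_def HS_iff
      proof (intro conjI allI)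
        show "rmax_vec (u t)" unfolding rmax_vec_def
        proof
          fix i obtain c where "u t i = ereal c" using ureal by blast
          then show "u t i \<noteq> \<infinity>" by simp
        qed
        fix i show "\<exists>j. la i + u t i \<le> lb j + u t j"
        proof (cases "ereal (v' i - t) \<le> x i")
          case True
          then have ui: "u t i = x i" unfolding u_def by simp
          obtain j where j: "la i + x i \<le> lb j + x j" using lx by blast
          have "lb j + x j \<le> lb j + u t j" by (rule add_left_mono[OF xu])
          then show ?thesis using j ui by (metis order_trans)
        next
          case False
          then have ui: "u t i = ereal (v' i - t)" unfolding u_def by simp
          obtain j where j: "la i + v i \<le> lb j + v j" using vL unfolding L_def HS_iff by blast
          have "la i + ereal (v' i - t) \<le> lb j + ereal (v' j - t)"
            by (rule shift2) (use j vv lainf lbinf in auto)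
          moreover have "lb j + ereal (v' j - t) \<le> lb j + u t j" unfolding u_def by (rule add_left_mono) simp
          ultimately show ?thesis using ui by (metis order_trans)
        qed
      qed
      define Mb where "Mb = Max (range (\<lambda>j. lb j + u t j))"
      have Mbge: "lb j + u t j \<le> Mb" for j unfolding Mb_def by (rule Max_ge) auto
      have "Mb \<in> range (\<lambda>j. lb j + u t j)" unfolding Mb_def by (rule Max_in) auto
      then obtain jb where jb: "Mb = lb jb + u t jb" by (rule rangeE)
      obtain cb where cb: "u t jb = ereal cb" using ureal by blast
      have Mbinf: "Mb \<noteq> \<infinity>" using jb cb lbinf[of jb] by (cases "lb jb") auto
      obtain c0 where c0: "u t j0 = ereal c0" using ureal by blast
      have Mbm: "Mb \<noteq> -\<infinity>" using Mbge[of j0] lbj0 c0 by auto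
      have lbyu: "lb i + y t \<delta> i = lb i + u t i" for i
      proof (cases "la i = -\<infinity>")
        case True then show ?thesis unfolding y_def by simp
      next
        case False
        then have "lb i = -\<infinity>" using ldj by blast
        moreover obtain c where "u t i = ereal c" using ureal by blast
        ultimately show ?thesis unfolding y_def using False by simp
      qed
      have au: "la i + u t i \<le> Mb" for i
      proof -
        have "Max (range (\<lambda>i. la i + u t i)) \<le> Mb" using uL unfolding L_def HS_def Mb_def by blast
        moreover have "la i + u t i \<le> Max (range (\<lambda>i. la i + u t i))" by (rule Max_ge) auto
        ultimately show ?thesis by simp
      qed
      have lt: "la i + y t \<delta> i < Mb" for i
      proof (cases "la i = -\<infinity>")
        case True
        obtain c where "u t i = ereal c" using ureal by blast
        then show ?thesis using True Mbm unfolding y_def by auto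
      next
        case False
        obtain c where c: "u t i = ereal c" using ureal by blast
        obtain d where d: "la i = ereal d" using False lainf[of i] by (cases "la i") auto
        obtain mb where mb: "Mb = ereal mb" using Mbinf Mbm by (cases Mb) auto
        have "d + c \<le> mb" using au[of i] c d mb by simp
        then show ?thesis unfolding y_def using False c d mb dpos by simp
      qed
      have "range (\<lambda>i. lb i + y t \<delta> i) = range (\<lambda>i. lb i + u t i)" using lbyu by simp
      then have "Max (range (\<lambda>i. la i + y t \<delta> i)) < Max (range (\<lambda>i. lb i + y t \<delta> i))"
        using lt unfolding Mb_def by simp
      moreover have "rmax_vec (y t \<delta>)" unfolding rmax_vec_def
      proof
        fix i obtain c where "u t i = ereal c" using ureal by blast
        then show "y t \<delta> i \<noteq> \<infinity>" unfolding y_def by simp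
      qed
      ultimately have "y t \<delta> \<in> (\<Inter>r. H r)" using strict_in by blast
      then show ?thesis by blast
    qed
    show "x \<in> H m" unfolding Hr[of m] HS_iff
    proof (intro conjI allI)
      show "rmax_vec x" by (rule rx)
      fix i
      define Mx where "Mx = Max (range (\<lambda>j. \<beta> m j + x j))"
      have "Mx \<in> range (\<lambda>j. \<beta> m j + x j)" unfolding Mx_def by (rule Max_in) auto
      then obtain jx where jx: "Mx = \<beta> m jx + x jx" by (rule rangeE)
      have Mxge: "\<beta> m j + x j \<le> Mx" for j unfolding Mx_def by (rule Max_ge) auto
      have "\<alpha> m i + x i \<le> Mx"
      proof (cases "\<alpha> m i + x i = -\<infinity>")
        case True then show ?thesis unfolding True by simp
      next
        case False
        have ainf: "\<alpha> m i \<noteq> \<infinity>" using ra[of m] by (simp add: rmax_vec_def)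
        obtain pa where pa: "\<alpha> m i = ereal pa" using False ainf xinf[of i] by (cases "\<alpha> m i") auto
        obtain px where px: "x i = ereal px" using False xinf[of i] pa by (cases "x i") auto
        define p where "p = pa + px"
        show ?thesis
        proof (rule ereal_le_epsilon2)
          fix \<delta> :: real assume dpos: "0 < \<delta>"
          define K where "K = Max (range (\<lambda>j. \<beta> m j + v j))"
          have Kge: "\<beta> m j + v j \<le> K" for j unfolding K_def by (rule Max_ge) auto
          have "K \<in> range (\<lambda>j. \<beta> m j + v j)" unfolding K_def by (rule Max_in) auto
          then obtain jk where jk: "K = \<beta> m jk + v jk" by (rule rangeE)
          have Kinf: "K \<noteq> \<infinity>" using jk vv[of jk] rb[of m] by (cases "\<beta> m jk") (auto simp: rmax_vec_def)
          define t where "t = (if K = -\<infinity> then 0 else real_of_ereal K - p + \<delta> + 1)"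
          have small: "\<beta> m j + ereal (v' j - t) < ereal (p - \<delta>)" for j
          proof (cases "K = -\<infinity>")
            case True
            then have "\<beta> m j = -\<infinity>" using Kge[of j] vv[of j] by (cases "\<beta> m j") auto
            then show ?thesis by simp
          next
            case False
            then obtain k where k: "K = ereal k" using Kinf by (cases K) auto
            have tk: "t = k - p + \<delta> + 1" unfolding t_def using k by simp
            have "\<beta> m j + ereal (v' j) \<le> ereal k" using Kge[of j] vv[of j] k by simp
            then show ?thesis using tk rb[of m] by (cases "\<beta> m j") (auto simp: rmax_vec_def)
          qed
          obtain j where j: "\<alpha> m i + y t \<delta> i \<le> \<beta> m j + y t \<delta> j"
            using yin[OF dpos, of t] Hr[of m] HS_iff by blast
          have "ereal (p - \<delta>) \<le> \<alpha> m i + y t \<delta> i"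
          proof -
            have "x i - ereal \<delta> \<le> u t i - ereal \<delta>" using xu[of i t] by (simp add: ereal_minus_mono)
            also have "\<dots> \<le> y t \<delta> i" by (rule yge[OF dpos])
            finally have "ereal (px - \<delta>) \<le> y t \<delta> i" using px by simp
            then have "\<alpha> m i + ereal (px - \<delta>) \<le> \<alpha> m i + y t \<delta> i" by (rule add_left_mono)
            moreover have "\<alpha> m i + ereal (px - \<delta>) = ereal (p - \<delta>)" using pa p_def by simp
            ultimately show ?thesis by simp
          qed
          also have "\<dots> \<le> \<beta> m j + y t \<delta> j" by (rule j)
          also have "\<dots> \<le> \<beta> m j + u t j" by (rule add_left_mono[OF yu[OF dpos]])
          finally have pj: "ereal (p - \<delta>) \<le> \<beta> m j + u t j" .
          show "\<alpha> m i + x i \<le> Mx + ereal \<delta>"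
          proof (cases "ereal (v' j - t) \<le> x j")
            case True
            then have "u t j = x j" unfolding u_def by simp
            then have "ereal (p - \<delta>) \<le> Mx" using pj Mxge[of j] by simp
            then show ?thesis using pa px p_def by (cases Mx) auto
          next
            case False
            then have "u t j = ereal (v' j - t)" unfolding u_def by simp
            then show ?thesis using pj small[of j] by simp
          qed
        qed
      qed
      then show "\<exists>j. \<alpha> m i + x i \<le> \<beta> m j + x j" using jx by auto
    qed
  qed
  have "L \<subseteq> (\<Inter>r. H r)" using LH by (rule INT_greatest)
  then have LI: "L = (\<Inter>r. H r)" using IL by (rule antisym)
  show ?thesis by (rule exI[of _ L]) (use hL LI in simp)
qed

end
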